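(* For $i\in\{1,2\}$ let $\mathcal{R}_i=(X_i,\Phi_i,\check X_i,\check\Phi_i)$ be a semisimple root datum, $\mathcal{T}_i=(T_i,\emptyset,\check T_i,\emptyset)$ a torus, $A_i$ a finite $\mathbb{Z}$-module with surjections $h_i:X_i\to A_i$ (with $\Phi_i\subseteq\ker h_i$) and $f_i:T_i\to A_i$, and let $\mathcal{R}_i'=\mathcal{R}_i\oplus_{(A_i,h_i,f_i)}\mathcal{T}_i=(B_i,\Phi_i',\check B_i,\check\Phi_i')$. If $\zeta:\mathcal{R}_1'\to\mathcal{R}_2'$ is a $p$-morphism (with $\zeta:B_1\to B_2$), then there exist $p$-morphisms $\zeta_1:\mathcal{R}_1\to\mathcal{R}_2$ (with $\zeta_1:X_1\to X_2$) and $\zeta_2:\mathcal{T}_1\to\mathcal{T}_2$ (with $\zeta_2:T_1\to T_2$) and a group homomorphism $\zeta_3:A_1\to A_2$ such that (a) $\zeta=(\zeta_1\oplus\zeta_2)|_{B_1}$; (b) $\zeta_3\circ h_1=h_2\circ\zeta_1$; (c) $\zeta_3\circ f_1=f_2\circ\zeta_2$. In particular $\zeta_1(\ker h_1)\subseteq\ker h_2$. If $\zeta$ is an isomorphism then so are $\zeta_1,\zeta_2,\zeta_3$, and $\zeta_1(\ker h_1)=\ker h_2$.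
   Context: Root data are reduced quadruples $(X,\Phi,\check X,\check\Phi)$ with perfect pairing; torus = no roots; semisimple means $\mathbb{Q}\Phi=\mathbb{Q}\otimes X$. Fix $p\ge0$ (a prime or $0$). Here a $p$-morphism written $\mathcal{R}\to\mathcal{R}'$ with $\mathcal{R}=(X,\Phi,\dots)$, $\mathcal{R}'=(X',\Phi',\dots)$ means a $\mathbb{Z}$-linear map $g:X\to X'$ together with a function $q:\Phi'\to\{p^n:n\ge0\}$ ($q\equiv1$ if $p=0$) and a bijection $\tau:\Phi'\to\Phi$ with $g(\tau(\alpha))=q(\alpha)\alpha$ and $\check g(\check\alpha)=q(\alpha)\tau(\alpha)^\vee$ for all $\alpha\in\Phi'$, where $\check g:\check X'\to\check X$ is the transpose. Central product $\mathcal{R}\oplus_{(A,h,f)}\mathcal{T}$: the root datum induced from the direct sum $\mathcal{R}\oplus\mathcal{T}$ by the submodule $X\oplus_A T=\{(x,t)\in X\oplus T: h(x)=f(t)\}$, i.e. with lattice $X\oplus_A T$, roots $\{(\alpha,0):\alpha\in\Phi\}$, dual lattice $\mathrm{Hom}(X\oplus_A T,\mathbb{Z})$ and coroots the restrictions of $(\check\alpha,0)$. *)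

theory Defs
  imports Main "HOL-Library.Product_Plus" "HOL-Computational_Algebra.Primes"
begin

definition zsc :: "int \<Rightarrow> 'a::ab_group_add \<Rightarrow> 'a" where
  "zsc k x = (if 0 \<le> k then (\<Sum>_<nat k. x) else - (\<Sum>_<nat (-k). x))"

definition zsubgroup :: "'a::ab_group_add set \<Rightarrow> bool" where
  "zsubgroup L \<longleftrightarrow> 0 \<in> L \<and> (\<forall>x\<in>L. \<forall>y\<in>L. x + y \<in> L) \<and> (\<forall>x\<in>L. - x \<in> L)"

definition zlattice :: "'a::ab_group_add set \<Rightarrow> bool" where
  "zlattice L \<longleftrightarrow> zsubgroup L \<and>
     (\<exists>(n::nat) (b::nat \<Rightarrow> 'a). (\<forall>i<n. b i \<in> L) \<and>
        (\<forall>x\<in>L. \<exists>!c::nat \<Rightarrow> int. (\<forall>i\<ge>n. c i = 0) \<and> x = (\<Sum>i<n. zsc (c i) (b i))))"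

definition zhom :: "'a::ab_group_add set \<Rightarrow> 'b::ab_group_add set \<Rightarrow> ('a \<Rightarrow> 'b) \<Rightarrow> bool" where
  "zhom L L' g \<longleftrightarrow> g ` L \<subseteq> L' \<and> (\<forall>x\<in>L. \<forall>y\<in>L. g (x + y) = g x + g y)"

text \<open>Z-linear functionals on L (elements of the dual lattice Hom(L,Z), compared on L).\<close>
definition zfunctional :: "'a::ab_group_add set \<Rightarrow> ('a \<Rightarrow> int) \<Rightarrow> bool" where
  "zfunctional L \<phi> \<longleftrightarrow> (\<forall>x\<in>L. \<forall>y\<in>L. \<phi> (x + y) = \<phi> x + \<phi> y)"

definition zspan :: "'a::ab_group_add set \<Rightarrow> 'a set" where
  "zspan S = {y. \<exists>F c. finite F \<and> F \<subseteq> S \<and> y = (\<Sum>a\<in>F. zsc (c a) a)}"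

text \<open>A (reduced) root datum (X, Phi, Hom(X,Z), {cor a | a in Phi}); the dual lattice is
  Hom(X,Z) with the evaluation pairing (perfect pairing), and cor a is the coroot of a.\<close>
definition root_datum :: "'a::ab_group_add set \<Rightarrow> 'a set \<Rightarrow> ('a \<Rightarrow> 'a \<Rightarrow> int) \<Rightarrow> bool" where
  "root_datum X \<Phi> cor \<longleftrightarrow>
     zlattice X \<and> finite \<Phi> \<and> \<Phi> \<subseteq> X \<and>
     (\<forall>\<alpha>\<in>\<Phi>. zfunctional X (cor \<alpha>)) \<and>
     (\<forall>\<alpha>\<in>\<Phi>. cor \<alpha> \<alpha> = 2) \<and>
     (\<forall>\<alpha>\<in>\<Phi>. \<forall>\<beta>\<in>\<Phi>. \<beta> - zsc (cor \<alpha> \<beta>) \<alpha> \<in> \<Phi>) \<and>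
     (\<forall>\<alpha>\<in>\<Phi>. \<forall>\<beta>\<in>\<Phi>. \<exists>\<gamma>\<in>\<Phi>. \<forall>x\<in>X. cor \<gamma> x = cor \<beta> x - cor \<beta> \<alpha> * cor \<alpha> x) \<and>
     (\<forall>\<alpha>\<in>\<Phi>. \<forall>\<beta>\<in>\<Phi>. (\<forall>x\<in>X. cor \<alpha> x = cor \<beta> x) \<longrightarrow> \<alpha> = \<beta>)"

definition reduced :: "'a::ab_group_add set \<Rightarrow> bool" where
  "reduced \<Phi> \<longleftrightarrow> (\<forall>\<alpha>\<in>\<Phi>. \<forall>\<beta>\<in>\<Phi>. \<forall>m n::int. n \<noteq> 0 \<and> zsc n \<beta> = zsc m \<alpha> \<longrightarrow> \<beta> = \<alpha> \<or> \<beta> = - \<alpha>)"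

definition reduced_root_datum :: "'a::ab_group_add set \<Rightarrow> 'a set \<Rightarrow> ('a \<Rightarrow> 'a \<Rightarrow> int) \<Rightarrow> bool" where
  "reduced_root_datum X \<Phi> cor \<longleftrightarrow> root_datum X \<Phi> cor \<and> reduced \<Phi>"

text \<open>Semisimple: Q Phi = Q (x) X, i.e. every x in X has a nonzero multiple in the Z-span of Phi.\<close>
definition semisimple :: "'a::ab_group_add set \<Rightarrow> 'a set \<Rightarrow> bool" where
  "semisimple X \<Phi> \<longleftrightarrow> (\<forall>x\<in>X. \<exists>n::int. n \<noteq> 0 \<and> zsc n x \<in> zspan \<Phi>)"

definition no_coroots :: "'a \<Rightarrow> 'a \<Rightarrow> int" where
  "no_coroots = (\<lambda>_ _. 0)"

definition torus :: "'a::ab_group_add set \<Rightarrow> bool" where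
  "torus T \<longleftrightarrow> reduced_root_datum T {} no_coroots"

definition cp_lattice :: "'x::ab_group_add set \<Rightarrow> 't::ab_group_add set \<Rightarrow> ('x \<Rightarrow> 'a) \<Rightarrow> ('t \<Rightarrow> 'a) \<Rightarrow> ('x \<times> 't) set" where
  "cp_lattice X T h f = {(x, t). x \<in> X \<and> t \<in> T \<and> h x = f t}"

definition cp_roots :: "'x set \<Rightarrow> ('x \<times> 't::ab_group_add) set" where
  "cp_roots \<Phi> = (\<lambda>\<alpha>. (\<alpha>, 0)) ` \<Phi>"

text \<open>Coroots of the central product: restrictions of (cor a, 0) to the sublattice.\<close>
definition cp_coroots :: "('x \<Rightarrow> 'x \<Rightarrow> int) \<Rightarrow> ('x \<times> 't) \<Rightarrow> ('x \<times> 't) \<Rightarrow> int" where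
  "cp_coroots cor = (\<lambda>\<beta> y. cor (fst \<beta>) (fst y))"

definition p_powers :: "nat \<Rightarrow> nat set" where
  "p_powers p = (if p = 0 then {1} else range (\<lambda>n. p ^ n))"

text \<open>A p-morphism (X,Phi,cor) -> (X',Phi',cor') given by g : X -> X', q : Phi' -> p-powers,
  bijection tau : Phi' -> Phi with g(tau a) = q(a) a and (transpose g)(cor' a) = q(a) cor(tau a).\<close>
definition p_morphism ::
  "nat \<Rightarrow> 'a::ab_group_add set \<Rightarrow> 'a set \<Rightarrow> ('a \<Rightarrow> 'a \<Rightarrow> int) \<Rightarrow>
   'b::ab_group_add set \<Rightarrow> 'b set \<Rightarrow> ('b \<Rightarrow> 'b \<Rightarrow> int) \<Rightarrow>
   ('a \<Rightarrow> 'b) \<Rightarrow> ('b \<Rightarrow> nat) \<Rightarrow> ('b \<Rightarrow> 'a) \<Rightarrow> bool" where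
  "p_morphism p X \<Phi> cor X' \<Phi>' cor' g q \<tau> \<longleftrightarrow>
     zhom X X' g \<and>
     (\<forall>\<alpha>\<in>\<Phi>'. q \<alpha> \<in> p_powers p) \<and>
     bij_betw \<tau> \<Phi>' \<Phi> \<and>
     (\<forall>\<alpha>\<in>\<Phi>'. g (\<tau> \<alpha>) = zsc (int (q \<alpha>)) \<alpha>) \<and>
     (\<forall>\<alpha>\<in>\<Phi>'. \<forall>x\<in>X. cor' \<alpha> (g x) = int (q \<alpha>) * cor (\<tau> \<alpha>) x)"

definition is_p_morphism ::
  "nat \<Rightarrow> 'a::ab_group_add set \<Rightarrow> 'a set \<Rightarrow> ('a \<Rightarrow> 'a \<Rightarrow> int) \<Rightarrow>
   'b::ab_group_add set \<Rightarrow> 'b set \<Rightarrow> ('b \<Rightarrow> 'b \<Rightarrow> int) \<Rightarrow> ('a \<Rightarrow> 'b) \<Rightarrow> bool" where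
  "is_p_morphism p X \<Phi> cor X' \<Phi>' cor' g \<longleftrightarrow> (\<exists>q \<tau>. p_morphism p X \<Phi> cor X' \<Phi>' cor' g q \<tau>)"

definition p_isomorphism ::
  "nat \<Rightarrow> 'a::ab_group_add set \<Rightarrow> 'a set \<Rightarrow> ('a \<Rightarrow> 'a \<Rightarrow> int) \<Rightarrow>
   'b::ab_group_add set \<Rightarrow> 'b set \<Rightarrow> ('b \<Rightarrow> 'b \<Rightarrow> int) \<Rightarrow> ('a \<Rightarrow> 'b) \<Rightarrow> bool" where
  "p_isomorphism p X \<Phi> cor X' \<Phi>' cor' g \<longleftrightarrow>
     is_p_morphism p X \<Phi> cor X' \<Phi>' cor' g \<and>
     (\<exists>g'. is_p_morphism p X' \<Phi>' cor' X \<Phi> cor g' \<and>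
        (\<forall>x\<in>X. g' (g x) = x) \<and> (\<forall>y\<in>X'. g (g' y) = y))"

definition zker :: "'a set \<Rightarrow> ('a \<Rightarrow> 'b::zero) \<Rightarrow> 'a set" where
  "zker X h = {x \<in> X. h x = 0}"

end

theory Submission
  imports Defs
begin


lemma zsc_0 [simp]: "zsc 0 x = 0" by (simp add: zsc_def)

lemma zsc_neg: "zsc (- k) x = - zsc k x"
  by (auto simp: zsc_def)

lemma zsc_plus1: "zsc (k + 1) x = zsc k x + x"
proof (cases "0 \<le> k")
  case True
  then have "nat (k+1) = Suc (nat k)" by simp
  then show ?thesis using True by (simp add: zsc_def)
next
  case False
  then have k: "nat (-k) = Suc (nat (-(k+1)))" by simp
  show ?thesis
  proof (cases "k = -1")
    case True then show ?thesis by (simp add: zsc_def)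
  next
    case False
    with \<open>\<not> 0 \<le> k\<close> have "\<not> 0 \<le> k + 1" by simp
    then show ?thesis using \<open>\<not> 0 \<le> k\<close> k by (simp add: zsc_def)
  qed
qed

lemma zsc_minus1: "zsc (k - 1) x = zsc k x - x"
  using zsc_plus1[of "k - 1" x] by simp

lemma zsc_add: "zsc (k + l) x = zsc k x + zsc l x"
proof (induction l rule: int_induct[where k=0])
  case base then show ?case by simp
next
  case (step1 i) then show ?case using zsc_plus1[of "k+i" x] zsc_plus1[of i x] by (simp add: add.assoc[symmetric])
next
  case (step2 i) then show ?case using zsc_minus1[of "k+i" x] zsc_minus1[of i x] by (simp add: diff_add_eq add_diff_eq)
qed

lemma zsc_1 [simp]: "zsc 1 x = x" using zsc_plus1[of 0 x] by simp

lemma zsc_diff: "zsc (k - l) x = zsc k x - zsc l x"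
  using zsc_add[of k "-l" x] zsc_neg[of l x] by simp

lemma zsc_distrib: "zsc k (x + y) = zsc k x + zsc k y"
proof (induction k rule: int_induct[where k=0])
  case base then show ?case by simp
next
  case (step1 i) then show ?case using zsc_plus1[of i "x+y"] zsc_plus1[of i x] zsc_plus1[of i y] by (simp add: ac_simps)
next
  case (step2 i)
  have "zsc (i - 1) (x + y) = zsc i (x+y) - (x+y)" by (rule zsc_minus1)
  also have "\<dots> = (zsc i x - x) + (zsc i y - y)" using step2 by (simp add: algebra_simps)
  finally show ?case by (simp add: zsc_minus1)
qed

lemma zsc_zero [simp]: "zsc k 0 = 0"
  using zsc_distrib[of k 0 0] by simp

lemma zsc_uminus: "zsc k (- x) = - zsc k x"
  using zsc_distrib[of k x "-x"] by (simp add: eq_neg_iff_add_eq_0 add.commute)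

lemma zsc_minus: "zsc k (x - y) = zsc k x - zsc k y"
  using zsc_distrib[of k x "-y"] zsc_uminus[of k y] by simp

lemma zsc_mult: "zsc (k * l) x = zsc k (zsc l x)"
proof (induction k rule: int_induct[where k=0])
  case base then show ?case by simp
next
  case (step1 i) then show ?case by (simp add: zsc_plus1 zsc_add distrib_right)
next
  case (step2 i) then show ?case by (simp add: zsc_minus1 zsc_diff left_diff_distrib)
qed

lemma zsc_sum: "zsc k (\<Sum>i\<in>A. f i) = (\<Sum>i\<in>A. zsc k (f i))"
  by (induction A rule: infinite_finite_induct) (auto simp: zsc_distrib)

lemma zsc_sum_left: "(\<Sum>i\<in>A. zsc (f i) x) = zsc (\<Sum>i\<in>A. f i) x"
  by (induction A rule: infinite_finite_induct) (auto simp: zsc_add)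

lemma zsc_pair: "zsc k (x, y) = (zsc k x, zsc k y)"
proof (induction k rule: int_induct[where k=0])
  case base then show ?case by (simp add: zero_prod_def)
next
  case (step1 i) then show ?case by (simp add: zsc_plus1)
next
  case (step2 i) then show ?case by (simp add: zsc_minus1)
qed

lemma snd_zsc: "snd (zsc k w) = zsc k (snd w)"
  by (metis prod.collapse snd_conv zsc_pair)
lemma fst_zsc: "fst (zsc k w) = zsc k (fst w)"
  by (metis prod.collapse fst_conv zsc_pair)

lemma zsubgroup_diff: "zsubgroup L \<Longrightarrow> x \<in> L \<Longrightarrow> y \<in> L \<Longrightarrow> x - y \<in> L"
  unfolding zsubgroup_def by (metis diff_conv_add_uminus)

lemma zsubgroup_zsc: "zsubgroup L \<Longrightarrow> x \<in> L \<Longrightarrow> zsc k x \<in> L"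
proof (induction k rule: int_induct[where k=0])
  case base then show ?case by (simp add: zsubgroup_def)
next
  case (step1 i) then show ?case by (simp add: zsc_plus1 zsubgroup_def)
next
  case (step2 i) then show ?case by (simp add: zsc_minus1 zsubgroup_diff)
qed

lemma zsubgroup_sum: "zsubgroup L \<Longrightarrow> (\<And>i. i \<in> A \<Longrightarrow> f i \<in> L) \<Longrightarrow> (\<Sum>i\<in>A. f i) \<in> L"
  by (induction A rule: infinite_finite_induct) (auto simp: zsubgroup_def)

lemma zhom_0: "zsubgroup L \<Longrightarrow> zhom L L' g \<Longrightarrow> g 0 = 0"
  unfolding zhom_def zsubgroup_def by (metis add_cancel_right_right add_0)

lemma zhom_uminus: "zsubgroup L \<Longrightarrow> zhom L L' g \<Longrightarrow> x \<in> L \<Longrightarrow> g (- x) = - g x"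
  using zhom_0[of L L' g] unfolding zhom_def zsubgroup_def
  by (metis add.right_inverse add_eq_0_iff)

lemma zhom_diff: "zsubgroup L \<Longrightarrow> zhom L L' g \<Longrightarrow> x \<in> L \<Longrightarrow> y \<in> L \<Longrightarrow> g (x - y) = g x - g y"
  using zhom_uminus[of L L' g y] unfolding zhom_def zsubgroup_def
  by (metis diff_conv_add_uminus)

lemma zhom_zsc: "zsubgroup L \<Longrightarrow> zhom L L' g \<Longrightarrow> x \<in> L \<Longrightarrow> g (zsc k x) = zsc k (g x)"
proof (induction k rule: int_induct[where k=0])
  case base then show ?case by (simp add: zhom_0)
next
  case (step1 i) then show ?case
    by (simp add: zsc_plus1 zhom_def zsubgroup_zsc)
next
  case (step2 i) then show ?case by (simp add: zsc_minus1 zhom_diff zsubgroup_zsc)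
qed

lemma zhom_sum: "zsubgroup L \<Longrightarrow> zhom L L' g \<Longrightarrow> (\<And>i. i \<in> A \<Longrightarrow> f i \<in> L) \<Longrightarrow> g (\<Sum>i\<in>A. f i) = (\<Sum>i\<in>A. g (f i))"
proof (induction A rule: infinite_finite_induct)
  case (infinite A) then show ?case by (simp add: zhom_0)
next
  case empty then show ?case by (simp add: zhom_0)
next
  case (insert a A) then show ?case by (simp add: zhom_def zsubgroup_sum)
qed

lemma zfun_0: "zsubgroup L \<Longrightarrow> zfunctional L \<phi> \<Longrightarrow> \<phi> 0 = 0"
  using zhom_0[of L UNIV \<phi>] by (simp add: zhom_def zfunctional_def)
lemma zfun_zhom: "zfunctional L \<phi> \<Longrightarrow> zhom L UNIV \<phi>"
  by (simp add: zhom_def zfunctional_def)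
lemma zfun_diff: "zsubgroup L \<Longrightarrow> zfunctional L \<phi> \<Longrightarrow> x \<in> L \<Longrightarrow> y \<in> L \<Longrightarrow> \<phi> (x - y) = \<phi> x - \<phi> y"
  using zhom_diff zfun_zhom by blast

lemma zsc_int: "zsc k (n::int) = k * n"
proof (induction k rule: int_induct[where k=0])
  case base then show ?case by simp
next
  case (step1 i) then show ?case using zsc_plus1[of i n] by (simp add: algebra_simps)
next
  case (step2 i) then show ?case using zsc_minus1[of i n] by (simp add: algebra_simps)
qed

lemma zfun_zsc: "zsubgroup L \<Longrightarrow> zfunctional L \<phi> \<Longrightarrow> x \<in> L \<Longrightarrow> \<phi> (zsc k x) = k * \<phi> x"
  using zhom_zsc[OF _ zfun_zhom] zsc_int by metis
lemma zfun_sum: "zsubgroup L \<Longrightarrow> zfunctional L \<phi> \<Longrightarrow> (\<And>i. i \<in> A \<Longrightarrow> f i \<in> L) \<Longrightarrow> \<phi> (\<Sum>i\<in>A. f i) = (\<Sum>i\<in>A. \<phi> (f i))"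
  using zhom_sum[OF _ zfun_zhom] by metis

lemma zlattice_torsionfree:
  assumes "zlattice L" "y \<in> L" "n \<noteq> 0" "zsc n y = 0"
  shows "y = 0"
proof -
  from assms(1) obtain m b where sg: "zsubgroup L" and b: "\<forall>i<m. b i \<in> L"
    and u: "\<forall>x\<in>L. \<exists>!c::nat \<Rightarrow> int. (\<forall>i\<ge>m. c i = 0) \<and> x = (\<Sum>i<m. zsc (c i) (b i))"
    unfolding zlattice_def by blast
  from u assms(2) obtain c where c: "\<forall>i\<ge>m. c i = 0" "y = (\<Sum>i<m. zsc (c i) (b i))" by blast
  have 1: "0 = (\<Sum>i<m. zsc (n * c i) (b i))"
    using assms(4) c(2) by (simp add: zsc_sum zsc_mult)
  have 2: "(0::'a) = (\<Sum>i<m. zsc ((\<lambda>_. 0::int) i) (b i))" by simp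
  have 0: "0 \<in> L" using sg by (simp add: zsubgroup_def)
  have 3: "\<forall>i\<ge>m. n * c i = 0" using c by simp
  from u 0 have "\<exists>!c::nat \<Rightarrow> int. (\<forall>i\<ge>m. c i = 0) \<and> 0 = (\<Sum>i<m. zsc (c i) (b i))" by blast
  then have U: "\<And>c c'. (\<forall>i\<ge>m. c i = 0) \<and> 0 = (\<Sum>i<m. zsc (c i) (b i)) \<Longrightarrow>
     (\<forall>i\<ge>m. c' i = 0) \<and> 0 = (\<Sum>i<m. zsc (c' i) (b i)) \<Longrightarrow> c = c'" by blast
  have "(\<lambda>i. n * c i) = (\<lambda>_. 0)"
    by (rule U) (use 1 2 3 in auto)
  then have "\<forall>i. c i = 0" using assms(3) by (metis mult_eq_0_iff)
  then show ?thesis using c by simp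
qed


lemma root_datum_sg: "root_datum X \<Phi> cor \<Longrightarrow> zsubgroup X"
  by (simp add: root_datum_def zlattice_def)

lemma root_refl_sum:
  assumes rd: "root_datum X \<Phi> cor" and a: "a \<in> \<Phi>"
  shows "zsc 2 (\<Sum>b\<in>\<Phi>. zsc (cor a b) b) = zsc (\<Sum>b\<in>\<Phi>. (cor a b)^2) a"
proof -
  have sg: "zsubgroup X" using rd by (rule root_datum_sg)
  have PX: "\<Phi> \<subseteq> X" and fin: "finite \<Phi>" and fa: "zfunctional X (cor a)" and caa: "cor a a = 2"
    and rfl: "\<forall>\<beta>\<in>\<Phi>. \<beta> - zsc (cor a \<beta>) a \<in> \<Phi>"
    using rd a unfolding root_datum_def by auto
  have aX: "a \<in> X" using PX a by auto
  define s where "s b = b - zsc (cor a b) a" for b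
  have sP: "s b \<in> \<Phi>" if "b \<in> \<Phi>" for b using rfl that s_def by auto
  have cs: "cor a (s b) = - cor a b" if "b \<in> \<Phi>" for b
  proof -
    have "b \<in> X" using that PX by auto
    then have "cor a (s b) = cor a b - cor a b * cor a a"
      unfolding s_def using zfun_diff[OF sg fa] zfun_zsc[OF sg fa aX] zsubgroup_zsc[OF sg aX] by simp
    then show ?thesis using caa by simp
  qed
  have ss: "s (s b) = b" if "b \<in> \<Phi>" for b
  proof -
    have "s (s b) = s b - zsc (cor a (s b)) a" by (simp only: s_def[of "s b"])
    also have "\<dots> = b" using cs[OF that] by (simp add: zsc_neg s_def[of b])
    finally show ?thesis .
  qed
  have inj: "inj_on s \<Phi>" by (metis inj_onI ss)
  have img: "s ` \<Phi> = \<Phi>" using sP ss by (metis image_subset_iff subsetI subset_antisym image_eqI)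
  define S where "S = (\<Sum>b\<in>\<Phi>. zsc (cor a b) b)"
  have "S = (\<Sum>b\<in>s ` \<Phi>. zsc (cor a b) b)" using img S_def by simp
  also have "\<dots> = (\<Sum>b\<in>\<Phi>. zsc (cor a (s b)) (s b))" using sum.reindex[OF inj] by simp
  also have "\<dots> = (\<Sum>b\<in>\<Phi>. - zsc (cor a b) b + zsc ((cor a b)^2) a)"
  proof (rule sum.cong[OF refl])
    fix b assume b: "b \<in> \<Phi>"
    show "zsc (cor a (s b)) (s b) = - zsc (cor a b) b + zsc ((cor a b)^2) a"
      using cs[OF b] by (simp add: s_def zsc_neg zsc_minus zsc_mult[symmetric] power2_eq_square)
  qed
  also have "\<dots> = - S + zsc (\<Sum>b\<in>\<Phi>. (cor a b)^2) a"
    by (simp only: sum.distrib sum_negf S_def zsc_sum_left)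
  finally have "S + S = zsc (\<Sum>b\<in>\<Phi>. (cor a b)^2) a" by (simp add: algebra_simps)
  moreover have "zsc 2 S = S + S" using zsc_add[of 1 1 S] by simp
  ultimately show ?thesis by (simp add: S_def)
qed


lemma semisimple_sep:
  assumes rd: "root_datum X \<Phi> cor" and ss: "semisimple X \<Phi>" and y: "y \<in> X"
    and z: "\<forall>b\<in>\<Phi>. cor b y = 0"
  shows "y = 0"
proof -
  have sg: "zsubgroup X" using rd by (rule root_datum_sg)
  have PX: "\<Phi> \<subseteq> X" and fin: "finite \<Phi>" and fa: "\<And>a. a \<in> \<Phi> \<Longrightarrow> zfunctional X (cor a)"
    and caa: "\<And>a. a \<in> \<Phi> \<Longrightarrow> cor a a = 2" and lat: "zlattice X"
    using rd unfolding root_datum_def by auto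
  obtain n F c where n: "n \<noteq> 0" and F: "finite F" "F \<subseteq> \<Phi>" and nc: "zsc n y = (\<Sum>a\<in>F. zsc (c a) a)"
    using ss y unfolding semisimple_def zspan_def by blast
  define c' where "c' a = (if a \<in> F then c a else 0)" for a
  have nc': "zsc n y = (\<Sum>a\<in>\<Phi>. zsc (c' a) a)"
    unfolding nc by (rule sum.mono_neutral_cong_left[OF fin F(2)]) (auto simp: c'_def)
  define K where "K a = (\<Sum>b\<in>\<Phi>. (cor a b)^2)" for a
  have Kpos: "K a > 0" if "a \<in> \<Phi>" for a
  proof -
    have "(cor a a)^2 \<le> K a" unfolding K_def by (rule member_le_sum[OF that]) (auto simp: fin)
    then show ?thesis using caa[OF that] by simp
  qed
  define L where "L = (\<Prod>a\<in>\<Phi>. K a)"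
  have L0: "L \<noteq> 0" unfolding L_def using Kpos fin by (simp add: prod_zero_iff) (metis less_irrefl)
  define M where "M a = L div K a" for a
  have LKM: "L = K a * M a" if "a \<in> \<Phi>" for a
    unfolding M_def L_def using dvd_prodI[OF fin that, of K] by simp
  define S where "S a = (\<Sum>b\<in>\<Phi>. zsc (cor a b) b)" for a
  have S2: "zsc 2 (S a) = zsc (K a) a" if "a \<in> \<Phi>" for a
    unfolding S_def K_def by (rule root_refl_sum[OF rd that])
  define \<mu> where "\<mu> a = 2 * c' a * M a" for a
  define lam where "lam b = (\<Sum>a\<in>\<Phi>. \<mu> a * cor a b)" for b
  define v where "v = zsc (L * n) y"
  have "v = (\<Sum>a\<in>\<Phi>. zsc L (zsc (c' a) a))" unfolding v_def zsc_mult nc' zsc_sum ..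
  also have "\<dots> = (\<Sum>a\<in>\<Phi>. zsc (c' a * M a) (zsc 2 (S a)))"
  proof (rule sum.cong[OF refl])
    fix a assume a: "a \<in> \<Phi>"
    have "zsc L (zsc (c' a) a) = zsc ((c' a * M a) * K a) a"
      unfolding zsc_mult[symmetric] using LKM[OF a] by (simp add: ac_simps)
    then show "zsc L (zsc (c' a) a) = zsc (c' a * M a) (zsc 2 (S a))"
      by (simp add: S2[OF a] zsc_mult)
  qed
  also have "\<dots> = (\<Sum>a\<in>\<Phi>. \<Sum>b\<in>\<Phi>. zsc (\<mu> a * cor a b) b)"
    by (simp add: zsc_mult[symmetric] S_def zsc_sum \<mu>_def ac_simps)
  also have "\<dots> = (\<Sum>b\<in>\<Phi>. zsc (lam b) b)"
    by (subst sum.swap) (simp add: lam_def zsc_sum_left)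
  finally have vl: "v = (\<Sum>b\<in>\<Phi>. zsc (lam b) b)" .
  have bX: "\<And>b. b \<in> \<Phi> \<Longrightarrow> b \<in> X" using PX by auto
  have vX: "v \<in> X" unfolding v_def by (rule zsubgroup_zsc[OF sg y])
  have cv: "cor a v = 0" if "a \<in> \<Phi>" for a
    unfolding v_def using zfun_zsc[OF sg fa[OF that] y] z that by simp
  have cv2: "cor a v = (\<Sum>b\<in>\<Phi>. lam b * cor a b)" if "a \<in> \<Phi>" for a
    unfolding vl using zfun_sum[OF sg fa[OF that], of \<Phi> "\<lambda>b. zsc (lam b) b"]
      zfun_zsc[OF sg fa[OF that]] bX zsubgroup_zsc[OF sg] by simp
  have "(\<Sum>b\<in>\<Phi>. (lam b)^2) = (\<Sum>b\<in>\<Phi>. \<Sum>a\<in>\<Phi>. lam b * (\<mu> a * cor a b))"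
    by (simp add: power2_eq_square lam_def sum_distrib_left)
  also have "\<dots> = (\<Sum>a\<in>\<Phi>. \<mu> a * (\<Sum>b\<in>\<Phi>. lam b * cor a b))"
    by (subst sum.swap) (simp add: sum_distrib_left ac_simps)
  also have "\<dots> = 0" using cv cv2 by simp
  finally have "\<forall>b\<in>\<Phi>. (lam b)^2 = 0"
    using sum_nonneg_eq_0_iff[OF fin, of "\<lambda>b. (lam b)^2"] by simp
  then have "v = 0" unfolding vl by simp
  then show ?thesis using zlattice_torsionfree[OF lat y, of "L*n"] L0 n v_def by simp
qed


lemma torus_lattice: "torus T \<Longrightarrow> zlattice T"
  by (simp add: torus_def reduced_root_datum_def root_datum_def)

lemma cp_sg:
  assumes "zsubgroup X" "zsubgroup T" "zhom X A h" "zhom T A f"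
  shows "zsubgroup (cp_lattice X T h f)"
proof -
  have "h 0 = 0" "f 0 = 0" using zhom_0 assms by blast+
  moreover have "\<And>x. x \<in> X \<Longrightarrow> h (-x) = - h x" "\<And>t. t \<in> T \<Longrightarrow> f (-t) = - f t"
    using zhom_uminus assms by blast+
  ultimately show ?thesis using assms unfolding zsubgroup_def cp_lattice_def zhom_def
    by (auto simp: zero_prod_def)
qed

lemma decomp:
  fixes X1 :: "'x1::ab_group_add set" and \<Phi>1 :: "'x1 set" and cor1 :: "'x1 \<Rightarrow> 'x1 \<Rightarrow> int"
    and X2 :: "'x2::ab_group_add set" and \<Phi>2 :: "'x2 set" and cor2 :: "'x2 \<Rightarrow> 'x2 \<Rightarrow> int"
    and T1 :: "'t1::ab_group_add set" and T2 :: "'t2::ab_group_add set"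
    and A1 :: "'a1::ab_group_add set" and A2 :: "'a2::ab_group_add set"
    and h1 :: "'x1 \<Rightarrow> 'a1" and f1 :: "'t1 \<Rightarrow> 'a1"
    and h2 :: "'x2 \<Rightarrow> 'a2" and f2 :: "'t2 \<Rightarrow> 'a2"
    and \<zeta> :: "'x1 \<times> 't1 \<Rightarrow> 'x2 \<times> 't2"
  assumes R1: "reduced_root_datum X1 \<Phi>1 cor1" and ss1: "semisimple X1 \<Phi>1"
    and R2: "reduced_root_datum X2 \<Phi>2 cor2" and ss2: "semisimple X2 \<Phi>2"
    and T1: "torus T1" and T2: "torus T2"
    and h1: "zhom X1 A1 h1" "h1 ` X1 = A1" "\<forall>\<alpha>\<in>\<Phi>1. h1 \<alpha> = 0"
    and f1: "zhom T1 A1 f1" "f1 ` T1 = A1"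
    and h2: "zhom X2 A2 h2" "h2 ` X2 = A2" "\<forall>\<alpha>\<in>\<Phi>2. h2 \<alpha> = 0"
    and f2: "zhom T2 A2 f2" "f2 ` T2 = A2"
    and zeta: "is_p_morphism p
                 (cp_lattice X1 T1 h1 f1) (cp_roots \<Phi>1) (cp_coroots cor1)
                 (cp_lattice X2 T2 h2 f2) (cp_roots \<Phi>2) (cp_coroots cor2) \<zeta>"
  shows "\<exists>\<zeta>1 \<zeta>2 \<zeta>3.
           is_p_morphism p X1 \<Phi>1 cor1 X2 \<Phi>2 cor2 \<zeta>1 \<and>
           is_p_morphism p T1 {} no_coroots T2 {} no_coroots \<zeta>2 \<and>
           zhom A1 A2 \<zeta>3 \<and>
           (\<forall>(x, t)\<in>cp_lattice X1 T1 h1 f1. \<zeta> (x, t) = (\<zeta>1 x, \<zeta>2 t)) \<and>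
           (\<forall>x\<in>X1. \<zeta>3 (h1 x) = h2 (\<zeta>1 x)) \<and>
           (\<forall>t\<in>T1. \<zeta>3 (f1 t) = f2 (\<zeta>2 t)) \<and>
           \<zeta>1 ` zker X1 h1 \<subseteq> zker X2 h2"
proof -
  define B1 where "B1 = cp_lattice X1 T1 h1 f1"
  define B2 where "B2 = cp_lattice X2 T2 h2 f2"
  have rd1: "root_datum X1 \<Phi>1 cor1" and rd2: "root_datum X2 \<Phi>2 cor2"
    using R1 R2 by (auto simp: reduced_root_datum_def)
  have sX1: "zsubgroup X1" and sX2: "zsubgroup X2" using rd1 rd2 by (auto intro: root_datum_sg)
  have lT1: "zlattice T1" and lT2: "zlattice T2" using T1 T2 by (auto intro: torus_lattice)
  have sT1: "zsubgroup T1" and sT2: "zsubgroup T2" using lT1 lT2 by (auto simp: zlattice_def)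
  have sB1: "zsubgroup B1" unfolding B1_def by (rule cp_sg[OF sX1 sT1 h1(1) f1(1)])
  have P1X: "\<Phi>1 \<subseteq> X1" using rd1 by (simp add: root_datum_def)
  have h10: "h1 0 = 0" and f10: "f1 0 = 0" and h20: "h2 0 = 0" and f20: "f2 0 = 0"
    using zhom_0 sX1 sT1 sX2 sT2 h1(1) f1(1) h2(1) f2(1) by blast+
  have B1I: "(x, t) \<in> B1" if "x \<in> X1" "t \<in> T1" "h1 x = f1 t" for x t
    using that by (simp add: B1_def cp_lattice_def)
  have B1D: "x \<in> X1" "t \<in> T1" "h1 x = f1 t" if "(x, t) \<in> B1" for x t
    using that by (auto simp: B1_def cp_lattice_def)
  have B2D: "x \<in> X2" "t \<in> T2" "h2 x = f2 t" if "(x, t) \<in> B2" for x t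
    using that by (auto simp: B2_def cp_lattice_def)
  obtain q \<tau> where zh: "zhom B1 B2 \<zeta>" and qp: "\<forall>\<alpha>\<in>cp_roots \<Phi>2. q \<alpha> \<in> p_powers p"
    and bij: "bij_betw \<tau> (cp_roots \<Phi>2) (cp_roots \<Phi>1)"
    and rt: "\<forall>\<alpha>\<in>cp_roots \<Phi>2. \<zeta> (\<tau> \<alpha>) = zsc (int (q \<alpha>)) \<alpha>"
    and cr: "\<forall>\<alpha>\<in>cp_roots \<Phi>2. \<forall>x\<in>B1. cp_coroots cor2 \<alpha> (\<zeta> x) = int (q \<alpha>) * cp_coroots cor1 (\<tau> \<alpha>) x"
    using zeta unfolding is_p_morphism_def p_morphism_def B1_def B2_def by blast
  have zB2: "\<zeta> w \<in> B2" if "w \<in> B1" for w using zh that by (auto simp: zhom_def)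
  have zadd: "\<zeta> (v + w) = \<zeta> v + \<zeta> w" if "v \<in> B1" "w \<in> B1" for v w
    using zh that by (auto simp: zhom_def)
  have \<tau>in: "\<tau> (b, 0) \<in> cp_roots \<Phi>1" if "b \<in> \<Phi>2" for b
    using bij that by (auto simp: bij_betw_def cp_roots_def)
  have rootB1: "snd (\<zeta> (a, 0)) = 0" if "a \<in> \<Phi>1" for a
  proof -
    have "(a, 0) \<in> \<tau> ` cp_roots \<Phi>2" using bij that by (auto simp: bij_betw_def cp_roots_def)
    then obtain b where b: "b \<in> \<Phi>2" "\<tau> (b, 0) = (a, 0)" by (auto simp: cp_roots_def)
    then have "\<zeta> (a, 0) = zsc (int (q (b, 0))) (b, 0)" using rt by (auto simp: cp_roots_def)
    then show ?thesis by (simp add: zsc_pair)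
  qed
  have claimA: "fst (\<zeta> (0, t)) = 0" if t: "t \<in> T1" "f1 t = 0" for t
  proof -
    have w: "(0, t) \<in> B1" using t h10 B1I sX1 by (simp add: zsubgroup_def)
    have yX: "fst (\<zeta> (0, t)) \<in> X2" using B2D(1)[of "fst (\<zeta> (0,t))" "snd (\<zeta> (0,t))"] zB2[OF w] by simp
    show ?thesis
    proof (rule semisimple_sep[OF rd2 ss2 yX], intro ballI)
      fix b assume b: "b \<in> \<Phi>2"
      then have bb: "(b, 0) \<in> cp_roots \<Phi>2" by (simp add: cp_roots_def)
      obtain a where a: "a \<in> \<Phi>1" "\<tau> (b, 0) = (a, 0)" using \<tau>in[OF b] by (auto simp: cp_roots_def)
      have fa: "zfunctional X1 (cor1 a)" using rd1 a by (simp add: root_datum_def)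
      have "cor2 b (fst (\<zeta> (0, t))) = int (q (b, 0)) * cor1 a 0"
        using cr bb w a by (auto simp: cp_coroots_def)
      then show "cor2 b (fst (\<zeta> (0, t))) = 0" using zfun_0[OF sX1 fa] by simp
    qed
  qed
  have claimB: "snd (\<zeta> (x, 0)) = 0" if x: "x \<in> X1" "h1 x = 0" for x
  proof -
    have w: "(x, 0) \<in> B1" using x f10 B1I sT1 by (simp add: zsubgroup_def)
    obtain n F c where n: "n \<noteq> 0" and F: "finite F" "F \<subseteq> \<Phi>1" and nc: "zsc n x = (\<Sum>a\<in>F. zsc (c a) a)"
      using ss1 x unfolding semisimple_def zspan_def by blast
    have aB: "(a, 0) \<in> B1" if "a \<in> F" for a
    proof (rule B1I)
      show "a \<in> X1" "h1 a = f1 0" using that F P1X h1(3) f10 by auto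
      show "0 \<in> T1" using sT1 by (simp add: zsubgroup_def)
    qed
    have "zsc n (x, 0) = (\<Sum>a\<in>F. zsc (c a) (a, (0::'t1)))"
      by (rule prod_eqI) (simp_all add: zsc_pair fst_sum snd_sum nc)
    then have "zsc n (\<zeta> (x, 0)) = \<zeta> (\<Sum>a\<in>F. zsc (c a) (a, (0::'t1)))"
      using zhom_zsc[OF sB1 zh w, of n] by metis
    also have "\<dots> = (\<Sum>a\<in>F. zsc (c a) (\<zeta> (a, 0)))"
      using zhom_sum[OF sB1 zh, of F "\<lambda>a. zsc (c a) (a, 0)"] zhom_zsc[OF sB1 zh] aB zsubgroup_zsc[OF sB1]
      by simp
    finally have "snd (zsc n (\<zeta> (x, 0))) = snd (\<Sum>a\<in>F. zsc (c a) (\<zeta> (a, 0)))"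
      by (rule arg_cong)
    then have "zsc n (snd (\<zeta> (x, 0))) = (\<Sum>a\<in>F. zsc (c a) (snd (\<zeta> (a, 0))))"
      by (simp only: snd_sum snd_zsc)
    also have "\<dots> = 0" using rootB1 F by (auto intro!: sum.neutral)
    finally have "zsc n (snd (\<zeta> (x, 0))) = 0" .
    moreover have "snd (\<zeta> (x, 0)) \<in> T2" using zB2[OF w] B2D(2)[of "fst (\<zeta> (x,0))"] by simp
    ultimately show ?thesis using zlattice_torsionfree[OF lT2 _ n] by blast
  qed
  define \<zeta>1 where "\<zeta>1 x = fst (\<zeta> (x, SOME t. t \<in> T1 \<and> f1 t = h1 x))" for x
  define \<zeta>2 where "\<zeta>2 t = snd (\<zeta> (SOME x. x \<in> X1 \<and> h1 x = f1 t, t))" for t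
  define \<zeta>3 where "\<zeta>3 a = h2 (\<zeta>1 (SOME x. x \<in> X1 \<and> h1 x = a))" for a
  have exT: "\<exists>t. t \<in> T1 \<and> f1 t = h1 x" if "x \<in> X1" for x
    using that h1(1,2) f1(2) by (metis image_eqI imageE)
  have exX: "\<exists>x. x \<in> X1 \<and> h1 x = f1 t" if "t \<in> T1" for t
    using that h1(2) f1(2) by (metis image_eqI imageE)
  have KL: "\<zeta> (x, t) = (\<zeta>1 x, \<zeta>2 t)" if w: "(x, t) \<in> B1" for x t
  proof -
    note xt = B1D[OF w]
    define t' where "t' = (SOME t. t \<in> T1 \<and> f1 t = h1 x)"
    have t': "t' \<in> T1" "f1 t' = h1 x" using someI_ex[OF exT[OF xt(1)]] t'_def by auto
    define x' where "x' = (SOME x. x \<in> X1 \<and> h1 x = f1 t)"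
    have x': "x' \<in> X1" "h1 x' = f1 t" using someI_ex[OF exX[OF xt(2)]] x'_def by auto
    have w1: "(x, t') \<in> B1" using B1I xt t' by simp
    have w2: "(0, t - t') \<in> B1"
      using B1I sX1 zsubgroup_diff[OF sT1 xt(2) t'(1)] zhom_diff[OF sT1 f1(1) xt(2) t'(1)] xt t' h10
      by (simp add: zsubgroup_def)
    have "\<zeta> (x, t) = \<zeta> ((x, t') + (0, t - t'))" by simp
    also have "\<dots> = \<zeta> (x, t') + \<zeta> (0, t - t')" using zadd w1 w2 by blast
    finally have e1: "fst (\<zeta> (x, t)) = \<zeta>1 x"
      using claimA[OF zsubgroup_diff[OF sT1 xt(2) t'(1)]] zhom_diff[OF sT1 f1(1) xt(2) t'(1)] xt t'
      by (simp add: \<zeta>1_def t'_def)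
    have w3: "(x', t) \<in> B1" using B1I xt x' by simp
    have w4: "(x - x', 0) \<in> B1"
      using B1I sT1 zsubgroup_diff[OF sX1 xt(1) x'(1)] zhom_diff[OF sX1 h1(1) xt(1) x'(1)] xt x' f10
      by (simp add: zsubgroup_def)
    have "\<zeta> (x, t) = \<zeta> ((x', t) + (x - x', 0))" by simp
    also have "\<dots> = \<zeta> (x', t) + \<zeta> (x - x', 0)" using zadd w3 w4 by blast
    finally have e2: "snd (\<zeta> (x, t)) = \<zeta>2 t"
      using claimB[OF zsubgroup_diff[OF sX1 xt(1) x'(1)]] zhom_diff[OF sX1 h1(1) xt(1) x'(1)] xt x'
      by (simp add: \<zeta>2_def x'_def)
    show ?thesis using e1 e2 by (metis prod.collapse)
  qed
  have KL2: "\<zeta>1 x \<in> X2" "\<zeta>2 t \<in> T2" "h2 (\<zeta>1 x) = f2 (\<zeta>2 t)" if "(x, t) \<in> B1" for x t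
    using zB2[OF that] KL[OF that] B2D by auto
  have zh1: "zhom X1 X2 \<zeta>1"
    unfolding zhom_def
  proof (intro conjI ballI subsetI)
    fix y assume "y \<in> \<zeta>1 ` X1"
    then obtain x where x: "x \<in> X1" "y = \<zeta>1 x" by blast
    obtain t where "t \<in> T1" "f1 t = h1 x" using exT[OF x(1)] by blast
    then show "y \<in> X2" using KL2(1)[OF B1I[OF x(1)]] x by simp
  next
    fix x y assume x: "x \<in> X1" and y: "y \<in> X1"
    obtain t where t: "t \<in> T1" "f1 t = h1 x" using exT[OF x] by blast
    obtain s where s: "s \<in> T1" "f1 s = h1 y" using exT[OF y] by blast
    have w1: "(x, t) \<in> B1" "(y, s) \<in> B1" using B1I x y t s by auto
    then have w: "(x, t) + (y, s) \<in> B1" using sB1 by (simp add: zsubgroup_def del: add_Pair)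
    have "(\<zeta>1 (x + y), \<zeta>2 (t + s)) = \<zeta> ((x, t) + (y, s))" using KL w by simp
    also have "\<dots> = \<zeta> (x, t) + \<zeta> (y, s)" using zadd w1 by blast
    finally show "\<zeta>1 (x + y) = \<zeta>1 x + \<zeta>1 y" using KL w1 by simp
  qed
  have zh2: "zhom T1 T2 \<zeta>2"
    unfolding zhom_def
  proof (intro conjI ballI subsetI)
    fix y assume "y \<in> \<zeta>2 ` T1"
    then obtain t where t: "t \<in> T1" "y = \<zeta>2 t" by blast
    obtain x where "x \<in> X1" "h1 x = f1 t" using exX[OF t(1)] by blast
    then show "y \<in> T2" using KL2(2)[OF B1I[OF _ t(1)]] t by simp
  next
    fix t s assume t: "t \<in> T1" and s: "s \<in> T1"
    obtain x where x: "x \<in> X1" "h1 x = f1 t" using exX[OF t] by blast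
    obtain y where y: "y \<in> X1" "h1 y = f1 s" using exX[OF s] by blast
    have w1: "(x, t) \<in> B1" "(y, s) \<in> B1" using B1I x y t s by auto
    then have w: "(x, t) + (y, s) \<in> B1" using sB1 by (simp add: zsubgroup_def del: add_Pair)
    have "(\<zeta>1 (x + y), \<zeta>2 (t + s)) = \<zeta> ((x, t) + (y, s))" using KL w by simp
    also have "\<dots> = \<zeta> (x, t) + \<zeta> (y, s)" using zadd w1 by blast
    finally show "\<zeta>2 (t + s) = \<zeta>2 t + \<zeta>2 s" using KL w1 by simp
  qed
  have z20: "\<zeta>2 0 = 0" using zhom_0[OF sT1 zh2] .
  have ker: "\<zeta>1 x \<in> X2 \<and> h2 (\<zeta>1 x) = 0" if "x \<in> X1" "h1 x = 0" for x
  proof -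
    have "(x, 0) \<in> B1" using B1I that f10 sT1 by (simp add: zsubgroup_def)
    then show ?thesis using KL2[of x 0] z20 f20 by simp
  qed
  have hz: "\<zeta>3 (h1 x) = h2 (\<zeta>1 x)" if x: "x \<in> X1" for x
  proof -
    define x' where "x' = (SOME x'. x' \<in> X1 \<and> h1 x' = h1 x)"
    have x': "x' \<in> X1" "h1 x' = h1 x" using someI_ex[of "\<lambda>x'. x' \<in> X1 \<and> h1 x' = h1 x"] x x'_def by blast+
    have d: "x - x' \<in> X1" "h1 (x - x') = 0"
      using zsubgroup_diff[OF sX1 x x'(1)] zhom_diff[OF sX1 h1(1) x x'(1)] x' by auto
    have "h2 (\<zeta>1 (x - x')) = 0" using ker[OF d] by simp
    moreover have "\<zeta>1 (x - x') = \<zeta>1 x - \<zeta>1 x'" using zhom_diff[OF sX1 zh1 x x'(1)] .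
    moreover have "\<zeta>1 x \<in> X2" "\<zeta>1 x' \<in> X2" using zh1 x x'(1) by (auto simp: zhom_def)
    ultimately have "h2 (\<zeta>1 x) - h2 (\<zeta>1 x') = 0" using zhom_diff[OF sX2 h2(1)] by metis
    then show ?thesis by (simp add: \<zeta>3_def x'_def[symmetric])
  qed
  have zh3: "zhom A1 A2 \<zeta>3"
    unfolding zhom_def
  proof (intro conjI ballI subsetI)
    fix b assume "b \<in> \<zeta>3 ` A1"
    then obtain x where x: "x \<in> X1" "b = \<zeta>3 (h1 x)" using h1(2) by blast
    then have "\<zeta>1 x \<in> X2" using zh1 by (auto simp: zhom_def)
    then show "b \<in> A2" using x hz h2(1) by (auto simp: zhom_def)
  next
    fix a b assume "a \<in> A1" "b \<in> A1"
    then obtain x y where x: "x \<in> X1" "a = h1 x" and y: "y \<in> X1" "b = h1 y" using h1(2) by blast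
    have "x + y \<in> X1" using sX1 x y by (simp add: zsubgroup_def)
    moreover have "a + b = h1 (x + y)" using h1(1) x y by (simp add: zhom_def)
    ultimately have "\<zeta>3 (a + b) = h2 (\<zeta>1 (x + y))" using hz by simp
    also have "\<dots> = h2 (\<zeta>1 x + \<zeta>1 y)" using zh1 x y by (auto simp: zhom_def)
    also have "\<dots> = h2 (\<zeta>1 x) + h2 (\<zeta>1 y)"
    proof -
      have "\<zeta>1 x \<in> X2" "\<zeta>1 y \<in> X2" using zh1 x y by (auto simp: zhom_def)
      then show ?thesis using h2(1) by (simp add: zhom_def)
    qed
    finally show "\<zeta>3 (a + b) = \<zeta>3 a + \<zeta>3 b" using hz x y by simp
  qed
  have fz: "\<zeta>3 (f1 t) = f2 (\<zeta>2 t)" if t: "t \<in> T1" for t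
  proof -
    obtain x where x: "x \<in> X1" "h1 x = f1 t" using exX[OF t] by blast
    have w: "(x, t) \<in> B1" using B1I x t by simp
    show ?thesis using hz[OF x(1)] KL2(3)[OF w] x by simp
  qed
  define q1 where "q1 b = q (b, 0)" for b
  define \<tau>1 where "\<tau>1 = fst \<circ> (\<tau> \<circ> (\<lambda>b. (b, 0::'t2)))"
  have pm1: "p_morphism p X1 \<Phi>1 cor1 X2 \<Phi>2 cor2 \<zeta>1 q1 \<tau>1"
    unfolding p_morphism_def
  proof (intro conjI ballI)
    show "zhom X1 X2 \<zeta>1" by (rule zh1)
  next
    fix b assume "b \<in> \<Phi>2" then show "q1 b \<in> p_powers p" using qp by (simp add: q1_def cp_roots_def)
  next
    have e1: "bij_betw (\<lambda>b. (b, 0::'t2)) \<Phi>2 (cp_roots \<Phi>2)"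
      by (auto simp: bij_betw_def cp_roots_def inj_on_def)
    have e2: "bij_betw fst (cp_roots \<Phi>1 :: ('x1 \<times> 't1) set) \<Phi>1"
      by (auto simp: bij_betw_def cp_roots_def inj_on_def image_image)
    show "bij_betw \<tau>1 \<Phi>2 \<Phi>1" unfolding \<tau>1_def
      by (rule bij_betw_trans[OF bij_betw_trans[OF e1 bij] e2])
  next
    fix b assume b: "b \<in> \<Phi>2"
    obtain a where a: "a \<in> \<Phi>1" "\<tau> (b, 0) = (a, 0)" using \<tau>in[OF b] by (auto simp: cp_roots_def)
    have w: "(a, 0) \<in> B1" using B1I a P1X h1(3) f10 sT1 by (auto simp: zsubgroup_def)
    have "\<zeta> (a, 0) = zsc (int (q (b, 0))) (b, 0)" using rt b a by (auto simp: cp_roots_def)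
    then show "\<zeta>1 (\<tau>1 b) = zsc (int (q1 b)) b"
      using KL[OF w] a by (simp add: \<tau>1_def q1_def zsc_pair)
  next
    fix b x assume b: "b \<in> \<Phi>2" and x: "x \<in> X1"
    obtain t where t: "t \<in> T1" "f1 t = h1 x" using exT[OF x] by blast
    have w: "(x, t) \<in> B1" using B1I x t by simp
    have "cp_coroots cor2 (b, 0) (\<zeta> (x, t)) = int (q (b, 0)) * cp_coroots cor1 (\<tau> (b, 0)) (x, t)"
      using cr b w by (auto simp: cp_roots_def)
    then show "cor2 b (\<zeta>1 x) = int (q1 b) * cor1 (\<tau>1 b) x"
      using KL[OF w] by (simp add: cp_coroots_def q1_def \<tau>1_def)
  qed
  have pm2: "is_p_morphism p T1 {} no_coroots T2 {} no_coroots \<zeta>2"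
    unfolding is_p_morphism_def p_morphism_def
    by (intro exI[of _ "\<lambda>_. 1"] exI[of _ id]) (simp add: bij_betw_def zh2)
  have kz: "\<zeta>1 ` zker X1 h1 \<subseteq> zker X2 h2"
    using ker by (auto simp: zker_def)
  show ?thesis
    apply (rule exI[of _ \<zeta>1], rule exI[of _ \<zeta>2], rule exI[of _ \<zeta>3])
    using pm1 pm2 zh3 KL hz fz kz unfolding is_p_morphism_def B1_def by blast
qed


theorem mainTheorem8:
  fixes p :: nat
    and X1 :: "'x1::ab_group_add set" and \<Phi>1 :: "'x1 set" and cor1 :: "'x1 \<Rightarrow> 'x1 \<Rightarrow> int"
    and X2 :: "'x2::ab_group_add set" and \<Phi>2 :: "'x2 set" and cor2 :: "'x2 \<Rightarrow> 'x2 \<Rightarrow> int"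
    and T1 :: "'t1::ab_group_add set" and T2 :: "'t2::ab_group_add set"
    and A1 :: "'a1::ab_group_add set" and A2 :: "'a2::ab_group_add set"
    and h1 :: "'x1 \<Rightarrow> 'a1" and f1 :: "'t1 \<Rightarrow> 'a1"
    and h2 :: "'x2 \<Rightarrow> 'a2" and f2 :: "'t2 \<Rightarrow> 'a2"
    and \<zeta> :: "'x1 \<times> 't1 \<Rightarrow> 'x2 \<times> 't2"
  assumes p: "p = 0 \<or> prime p"
    and R1: "reduced_root_datum X1 \<Phi>1 cor1" and ss1: "semisimple X1 \<Phi>1"
    and R2: "reduced_root_datum X2 \<Phi>2 cor2" and ss2: "semisimple X2 \<Phi>2"
    and T1: "torus T1" and T2: "torus T2"
    and A1: "zsubgroup A1" "finite A1" and A2: "zsubgroup A2" "finite A2"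
    and h1: "zhom X1 A1 h1" "h1 ` X1 = A1" "\<forall>\<alpha>\<in>\<Phi>1. h1 \<alpha> = 0"
    and f1: "zhom T1 A1 f1" "f1 ` T1 = A1"
    and h2: "zhom X2 A2 h2" "h2 ` X2 = A2" "\<forall>\<alpha>\<in>\<Phi>2. h2 \<alpha> = 0"
    and f2: "zhom T2 A2 f2" "f2 ` T2 = A2"
    and zeta: "is_p_morphism p
                 (cp_lattice X1 T1 h1 f1) (cp_roots \<Phi>1) (cp_coroots cor1)
                 (cp_lattice X2 T2 h2 f2) (cp_roots \<Phi>2) (cp_coroots cor2) \<zeta>"
  shows "\<exists>\<zeta>1 \<zeta>2 \<zeta>3.
           is_p_morphism p X1 \<Phi>1 cor1 X2 \<Phi>2 cor2 \<zeta>1 \<and>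
           is_p_morphism p T1 {} no_coroots T2 {} no_coroots \<zeta>2 \<and>
           zhom A1 A2 \<zeta>3 \<and>
           (\<forall>(x, t)\<in>cp_lattice X1 T1 h1 f1. \<zeta> (x, t) = (\<zeta>1 x, \<zeta>2 t)) \<and>
           (\<forall>x\<in>X1. \<zeta>3 (h1 x) = h2 (\<zeta>1 x)) \<and>
           (\<forall>t\<in>T1. \<zeta>3 (f1 t) = f2 (\<zeta>2 t)) \<and>
           \<zeta>1 ` zker X1 h1 \<subseteq> zker X2 h2 \<and>
           (p_isomorphism p
              (cp_lattice X1 T1 h1 f1) (cp_roots \<Phi>1) (cp_coroots cor1)
              (cp_lattice X2 T2 h2 f2) (cp_roots \<Phi>2) (cp_coroots cor2) \<zeta>
            \<longrightarrow> p_isomorphism p X1 \<Phi>1 cor1 X2 \<Phi>2 cor2 \<zeta>1 \<and>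
                p_isomorphism p T1 {} no_coroots T2 {} no_coroots \<zeta>2 \<and>
                bij_betw \<zeta>3 A1 A2 \<and>
                \<zeta>1 ` zker X1 h1 = zker X2 h2)"
  proof -
  define B1 where "B1 = cp_lattice X1 T1 h1 f1"
  define B2 where "B2 = cp_lattice X2 T2 h2 f2"
  obtain \<zeta>1 \<zeta>2 \<zeta>3 where
    m1: "is_p_morphism p X1 \<Phi>1 cor1 X2 \<Phi>2 cor2 \<zeta>1" and
    m2: "is_p_morphism p T1 {} no_coroots T2 {} no_coroots \<zeta>2" and
    m3: "zhom A1 A2 \<zeta>3" and
    kl: "\<forall>(x, t)\<in>B1. \<zeta> (x, t) = (\<zeta>1 x, \<zeta>2 t)" and
    hb: "\<forall>x\<in>X1. \<zeta>3 (h1 x) = h2 (\<zeta>1 x)" and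
    fc: "\<forall>t\<in>T1. \<zeta>3 (f1 t) = f2 (\<zeta>2 t)" and
    kk: "\<zeta>1 ` zker X1 h1 \<subseteq> zker X2 h2"
    using decomp[OF R1 ss1 R2 ss2 T1 T2 h1 f1 h2 f2 zeta] unfolding B1_def by blast
  have iso: "p_isomorphism p X1 \<Phi>1 cor1 X2 \<Phi>2 cor2 \<zeta>1 \<and>
             p_isomorphism p T1 {} no_coroots T2 {} no_coroots \<zeta>2 \<and>
             bij_betw \<zeta>3 A1 A2 \<and> \<zeta>1 ` zker X1 h1 = zker X2 h2"
    if I: "p_isomorphism p B1 (cp_roots \<Phi>1) (cp_coroots cor1) B2 (cp_roots \<Phi>2) (cp_coroots cor2) \<zeta>"
  proof -
    obtain \<zeta>' where z': "is_p_morphism p B2 (cp_roots \<Phi>2) (cp_coroots cor2) B1 (cp_roots \<Phi>1) (cp_coroots cor1) \<zeta>'"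
      and inv1: "\<forall>x\<in>B1. \<zeta>' (\<zeta> x) = x" and inv2: "\<forall>y\<in>B2. \<zeta> (\<zeta>' y) = y"
      and zz: "is_p_morphism p B1 (cp_roots \<Phi>1) (cp_coroots cor1) B2 (cp_roots \<Phi>2) (cp_coroots cor2) \<zeta>"
      using I unfolding p_isomorphism_def by blast
    obtain \<eta>1 \<eta>2 \<eta>3 where
      n1: "is_p_morphism p X2 \<Phi>2 cor2 X1 \<Phi>1 cor1 \<eta>1" and
      n2: "is_p_morphism p T2 {} no_coroots T1 {} no_coroots \<eta>2" and
      n3: "zhom A2 A1 \<eta>3" and
      kl': "\<forall>(x, t)\<in>B2. \<zeta>' (x, t) = (\<eta>1 x, \<eta>2 t)" and
      hb': "\<forall>x\<in>X2. \<eta>3 (h2 x) = h1 (\<eta>1 x)" and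
      fc': "\<forall>t\<in>T2. \<eta>3 (f2 t) = f1 (\<eta>2 t)" and
      kk': "\<eta>1 ` zker X2 h2 \<subseteq> zker X1 h1"
      using decomp[OF R2 ss2 R1 ss1 T2 T1 h2 f2 h1 f1 z'[unfolded B1_def B2_def]] unfolding B2_def by blast
    have zh: "zhom B1 B2 \<zeta>" and zh': "zhom B2 B1 \<zeta>'"
      using zz z' unfolding is_p_morphism_def p_morphism_def by blast+
    have exT1: "\<exists>t. t \<in> T1 \<and> f1 t = h1 x" if "x \<in> X1" for x
      using that h1(1,2) f1(2) by (metis image_eqI imageE)
    have exX1: "\<exists>x. x \<in> X1 \<and> h1 x = f1 t" if "t \<in> T1" for t
      using that h1(2) f1(2) by (metis image_eqI imageE)
    have exT2: "\<exists>t. t \<in> T2 \<and> f2 t = h2 x" if "x \<in> X2" for x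
      using that h2(1,2) f2(2) by (metis image_eqI imageE)
    have exX2: "\<exists>x. x \<in> X2 \<and> h2 x = f2 t" if "t \<in> T2" for t
      using that h2(2) f2(2) by (metis image_eqI imageE)
    have inv_both1: "\<eta>1 (\<zeta>1 x) = x \<and> \<eta>2 (\<zeta>2 t) = t" if w: "(x, t) \<in> B1" for x t
    proof -
      have "\<zeta> (x, t) \<in> B2" using zh w by (auto simp: zhom_def)
      then have w2: "(\<zeta>1 x, \<zeta>2 t) \<in> B2" using kl w by auto
      have "(x, t) = \<zeta>' (\<zeta> (x, t))" using inv1 w by auto
      also have "\<dots> = (\<eta>1 (\<zeta>1 x), \<eta>2 (\<zeta>2 t))"
      proof -
        have "\<zeta> (x, t) = (\<zeta>1 x, \<zeta>2 t)" using kl w by blast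
        moreover have "\<zeta>' (\<zeta>1 x, \<zeta>2 t) = (\<eta>1 (\<zeta>1 x), \<eta>2 (\<zeta>2 t))" using kl' w2 by blast
        ultimately show ?thesis by simp
      qed
      finally show ?thesis by simp
    qed
    have inv_both2: "\<zeta>1 (\<eta>1 x) = x \<and> \<zeta>2 (\<eta>2 t) = t" if w: "(x, t) \<in> B2" for x t
    proof -
      have "\<zeta>' (x, t) \<in> B1" using zh' w by (auto simp: zhom_def)
      then have w2: "(\<eta>1 x, \<eta>2 t) \<in> B1" using kl' w by auto
      have "(x, t) = \<zeta> (\<zeta>' (x, t))" using inv2 w by auto
      also have "\<dots> = (\<zeta>1 (\<eta>1 x), \<zeta>2 (\<eta>2 t))"
      proof -
        have "\<zeta>' (x, t) = (\<eta>1 x, \<eta>2 t)" using kl' w by blast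
        moreover have "\<zeta> (\<eta>1 x, \<eta>2 t) = (\<zeta>1 (\<eta>1 x), \<zeta>2 (\<eta>2 t))" using kl w2 by blast
        ultimately show ?thesis by simp
      qed
      finally show ?thesis by simp
    qed
    have i1: "\<eta>1 (\<zeta>1 x) = x" if xin: "x \<in> X1" for x
    proof -
      obtain t where "t \<in> T1" "f1 t = h1 x" using exT1[OF xin] by blast
      then show ?thesis using inv_both1[of x t] xin by (simp add: B1_def cp_lattice_def)
    qed
    have i2: "\<zeta>1 (\<eta>1 x) = x" if xin: "x \<in> X2" for x
    proof -
      obtain t where "t \<in> T2" "f2 t = h2 x" using exT2[OF xin] by blast
      then show ?thesis using inv_both2[of x t] xin by (simp add: B2_def cp_lattice_def)
    qed
    have j1: "\<eta>2 (\<zeta>2 t) = t" if xin: "t \<in> T1" for t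
    proof -
      obtain x where "x \<in> X1" "h1 x = f1 t" using exX1[OF xin] by blast
      then show ?thesis using inv_both1[of x t] xin by (simp add: B1_def cp_lattice_def)
    qed
    have j2: "\<zeta>2 (\<eta>2 t) = t" if xin: "t \<in> T2" for t
    proof -
      obtain x where "x \<in> X2" "h2 x = f2 t" using exX2[OF xin] by blast
      then show ?thesis using inv_both2[of x t] xin by (simp add: B2_def cp_lattice_def)
    qed
    have zX: "\<zeta>1 x \<in> X2" if "x \<in> X1" for x using m1 that unfolding is_p_morphism_def p_morphism_def zhom_def by blast
    have eX: "\<eta>1 x \<in> X1" if "x \<in> X2" for x using n1 that unfolding is_p_morphism_def p_morphism_def zhom_def by blast
    have b3: "bij_betw \<zeta>3 A1 A2"
    proof (rule bij_betw_byWitness[where f'=\<eta>3])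
      show "\<forall>a\<in>A1. \<eta>3 (\<zeta>3 a) = a" using h1(2) hb hb' zX i1 by auto
      show "\<forall>a\<in>A2. \<zeta>3 (\<eta>3 a) = a" using h2(2) hb hb' eX i2 by auto
      show "\<zeta>3 ` A1 \<subseteq> A2" using m3 by (simp add: zhom_def)
      show "\<eta>3 ` A2 \<subseteq> A1" using n3 by (simp add: zhom_def)
    qed
    have k: "\<zeta>1 ` zker X1 h1 = zker X2 h2"
    proof
      show "\<zeta>1 ` zker X1 h1 \<subseteq> zker X2 h2" by (rule kk)
      show "zker X2 h2 \<subseteq> \<zeta>1 ` zker X1 h1"
      proof
        fix y assume y: "y \<in> zker X2 h2"
        then have "\<eta>1 y \<in> zker X1 h1" using kk' by blast
        moreover have "y = \<zeta>1 (\<eta>1 y)" using i2 y by (simp add: zker_def)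
        ultimately show "y \<in> \<zeta>1 ` zker X1 h1" by blast
      qed
    qed
    show ?thesis unfolding p_isomorphism_def using m1 m2 n1 n2 i1 i2 j1 j2 b3 k by blast
  qed
  show ?thesis
    apply (rule exI[of _ \<zeta>1], rule exI[of _ \<zeta>2], rule exI[of _ \<zeta>3])
    using m1 m2 m3 kl hb fc kk iso unfolding B1_def B2_def by blast
qed

end
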